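(* Let $K\subset\mathbb{N}$ have upper natural density $\rho>0$ and let $\alpha\in(0,1)$ be irrational. Then $A_K(\alpha)$ has Lebesgue measure at least $\rho$. Furthermore, for every Bernoulli system $(\Omega,S,\mu)$ and every ball $B\subset\Omega$ with $\mu(B)>0$, for $\mu$-almost every $\omega\in\Omega$ the set $A_{K\cap K(\omega,B)}(\alpha)$ has Lebesgue measure at least $\rho$.
   Context: For $K\subset\mathbb{N}$ and $\alpha$, $A_K(\alpha)=\overline{\{\{k\alpha\}:k\in K\}}\subset[0,1]$, where $\{x\}$ is the fractional part. Upper natural density of $K$ is $\limsup_n\#(K\cap[1,n])/n$. A Bernoulli system: $\Lambda$ a finite set, $\Omega=\Lambda^{\mathbb{N}}$, $S$ the left shift $S(\omega_1\omega_2\dots)=\omega_2\omega_3\dots$, $\mu=\mu_\Lambda^{\mathbb{N}}$ a product measure where $\mu_\Lambda=(p_\lambda)_{\lambda\in\Lambda}$ is a probability vector with all $p_\lambda>0$; $\Omega$ carries the metric $d(\omega,\omega')=(\#\Lambda)^{-\min\{i:\omega_i\ne\omega'_i\}}$, and balls refer to this metric. For $B\subset\Omega$, $K(\omega,B)=\{k\in\mathbb{N}:S^k\omega\in B\}$. *)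

theory Defs
  imports "HOL-Probability.Probability"
begin

definition A_set :: "nat set \<Rightarrow> real \<Rightarrow> real set" where
  "A_set K \<alpha> = closure ((\<lambda>k. frac (real k * \<alpha>)) ` K)"

definition upper_density :: "nat set \<Rightarrow> ereal" where
  "upper_density K = limsup (\<lambda>n. ereal (real (card (K \<inter> {1..n})) / real n))"

text \<open>Bernoulli system over a finite alphabet 'a (the set Lambda is UNIV :: 'a set).
  Sequences are indexed from 0; position i corresponds to omega_(i+1) in the paper.\<close>
definition shift :: "(nat \<Rightarrow> 'a) \<Rightarrow> (nat \<Rightarrow> 'a)" where
  "shift \<omega> = (\<lambda>i. \<omega> (Suc i))"

definition bernoulli_measure :: "'a pmf \<Rightarrow> (nat \<Rightarrow> 'a) measure" where
  "bernoulli_measure p = PiM UNIV (\<lambda>_. measure_pmf p)"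

text \<open>d(omega,omega') = (#Lambda)^(-min{i : omega_i \<noteq> omega'_i}), paper indices start at 1.\<close>
definition seq_dist :: "(nat \<Rightarrow> 'a::finite) \<Rightarrow> (nat \<Rightarrow> 'a) \<Rightarrow> real" where
  "seq_dist \<omega> \<omega>' = (if \<omega> = \<omega>' then 0
      else real CARD('a) powr (- (real (LEAST i. \<omega> i \<noteq> \<omega>' i) + 1)))"

definition seq_ball :: "(nat \<Rightarrow> 'a::finite) \<Rightarrow> real \<Rightarrow> (nat \<Rightarrow> 'a) set" where
  "seq_ball \<omega> r = {\<omega>'. seq_dist \<omega> \<omega>' < r}"

definition seq_cball :: "(nat \<Rightarrow> 'a::finite) \<Rightarrow> real \<Rightarrow> (nat \<Rightarrow> 'a) set" where
  "seq_cball \<omega> r = {\<omega>'. seq_dist \<omega> \<omega>' \<le> r}"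

definition return_times :: "(nat \<Rightarrow> 'a) \<Rightarrow> (nat \<Rightarrow> 'a) set \<Rightarrow> nat set" where
  "return_times \<omega> B = {k. k \<ge> 1 \<and> (shift ^^ k) \<omega> \<in> B}"

end

theory Submission imports Defs "HOL-Analysis.Kronecker_Approximation_Theorem" begin

lemma frac_sep:
  fixes a b s :: real and d :: int
  assumes "a - b = real_of_int d * s" "d \<noteq> 0" "\<bar>real_of_int d\<bar> * \<bar>s\<bar> \<le> 1 - \<bar>s\<bar>"
  shows "\<bar>frac a - frac b\<bar> \<ge> \<bar>s\<bar>"
proof -
  define m where "m = \<lfloor>a\<rfloor> - \<lfloor>b\<rfloor>"
  have e: "frac a - frac b = real_of_int d * s - real_of_int m"
    using assms(1) by (simp add: frac_def m_def)
  have ds: "\<bar>real_of_int d * s\<bar> = \<bar>real_of_int d\<bar> * \<bar>s\<bar>" by (simp add: abs_mult)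
  have d1: "\<bar>real_of_int d\<bar> \<ge> 1" using assms(2) by linarith
  have "\<bar>real_of_int d\<bar> * \<bar>s\<bar> \<ge> 1 * \<bar>s\<bar>" by (rule mult_right_mono[OF d1]) simp
  show ?thesis
  proof (cases "m = 0")
    case True then show ?thesis using e ds \<open>_ \<ge> 1 * \<bar>s\<bar>\<close> by simp
  next
    case False
    then have "\<bar>real_of_int m\<bar> \<ge> 1" by linarith
    then show ?thesis using e ds assms(3) by linarith
  qed
qed


lemma block_count:
  fixes A Th :: "real set" and s x :: real and T :: nat
  assumes s0: "s \<noteq> 0" and Ts: "real T * \<bar>s\<bar> \<le> 1" and Th: "Th \<in> sets lborel"
    and thick: "\<And>a u. a \<in> A \<Longrightarrow> 0 \<le> u \<Longrightarrow> u \<le> \<bar>s\<bar> \<Longrightarrow> a + u \<in> Th"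
    and fin: "emeasure lborel Th < \<infinity>"
  shows "real (card {t. t < T \<and> frac (x + real t * s) \<in> A}) * \<bar>s\<bar> \<le> measure lborel Th"
proof -
  define S where "S = {t. t < T \<and> frac (x + real t * s) \<in> A}"
  define I where "I t = {frac (x + real t * s)..<frac (x + real t * s) + \<bar>s\<bar>}" for t
  have finS: "finite S" unfolding S_def by auto
  have disj: "disjoint_family_on I S"
  unfolding disjoint_family_on_def
  proof (intro ballI impI)
    fix t t' assume tS: "t \<in> S" "t' \<in> S" "t \<noteq> t'"
    have "\<bar>frac (x + real t * s) - frac (x + real t' * s)\<bar> \<ge> \<bar>s\<bar>"
    proof (rule frac_sep[where d = "int t - int t'"])
      show "x + real t * s - (x + real t' * s) = real_of_int (int t - int t') * s"
        by (simp add: algebra_simps)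
      show "int t - int t' \<noteq> 0" using tS by simp
      have "\<bar>real_of_int (int t - int t')\<bar> \<le> real T - 1" using tS unfolding S_def by auto
      then have "\<bar>real_of_int (int t - int t')\<bar> * \<bar>s\<bar> \<le> (real T - 1) * \<bar>s\<bar>"
        by (rule mult_right_mono) simp
      then show "\<bar>real_of_int (int t - int t')\<bar> * \<bar>s\<bar> \<le> 1 - \<bar>s\<bar>" using Ts
        by (simp add: algebra_simps)
    qed
    then show "I t \<inter> I t' = {}" unfolding I_def by auto
  qed
  have sub: "(\<Union>t\<in>S. I t) \<subseteq> Th"
  proof
    fix y assume "y \<in> (\<Union>t\<in>S. I t)"
    then obtain t where t: "t \<in> S" "y \<in> I t" by auto
    have "frac (x + real t * s) + (y - frac (x + real t * s)) \<in> Th"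
      using t by (intro thick) (auto simp: S_def I_def)
    then show "y \<in> Th" by simp
  qed
  have "(\<Sum>t\<in>S. emeasure lborel (I t)) = emeasure lborel (\<Union>t\<in>S. I t)"
    using disj finS by (intro sum_emeasure) (auto simp: I_def[abs_def])
  also have "\<dots> \<le> emeasure lborel Th" by (rule emeasure_mono[OF sub Th])
  also have "\<dots> = ennreal (measure lborel Th)" using fin by (simp add: emeasure_eq_ennreal_measure)
  finally have "(\<Sum>t\<in>S. ennreal \<bar>s\<bar>) \<le> ennreal (measure lborel Th)"
    by (simp add: I_def)
  then have "ennreal (real (card S) * \<bar>s\<bar>) \<le> ennreal (measure lborel Th)"
    by (simp add: ennreal_mult' ennreal_of_nat_eq_real_of_nat)
  then show ?thesis unfolding S_def[symmetric]
    by (subst (asm) ennreal_le_iff) auto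
qed


lemma window_count:
  fixes A Th :: "real set" and \<alpha> s :: real and q T m :: nat and p :: int
  assumes sdef: "s = real q * \<alpha> - real_of_int p" and s0: "s \<noteq> 0" and Ts: "real T * \<bar>s\<bar> \<le> 1"
    and Th: "Th \<in> sets lborel"
    and thick: "\<And>a u. a \<in> A \<Longrightarrow> 0 \<le> u \<Longrightarrow> u \<le> \<bar>s\<bar> \<Longrightarrow> a + u \<in> Th"
    and fin: "emeasure lborel Th < \<infinity>"
  shows "real (card {k. m \<le> k \<and> k < m + q * T \<and> frac (real k * \<alpha>) \<in> A}) * \<bar>s\<bar>
           \<le> real q * measure lborel Th"
proof -
  define S where "S r = {t. t < T \<and> frac (real (m + r) * \<alpha> + real t * s) \<in> A}" for r
  have sub: "{k. m \<le> k \<and> k < m + q * T \<and> frac (real k * \<alpha>) \<in> A} \<subseteq>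
             (\<Union>r\<in>{..<q}. (\<lambda>t. m + r + q * t) ` S r)"
  proof
    fix k assume k: "k \<in> {k. m \<le> k \<and> k < m + q * T \<and> frac (real k * \<alpha>) \<in> A}"
    have q0: "q > 0" using k by (cases q) auto
    define r where "r = (k - m) mod q"
    define t where "t = (k - m) div q"
    have kk: "k = m + r + q * t" using k by (simp add: r_def t_def)
    have rq: "r < q" using q0 by (simp add: r_def)
    have tT: "t < T"
    proof -
      have "k - m < q * T" using k by auto
      then show ?thesis unfolding t_def using q0
        by (simp add: div_less_iff_less_mult mult.commute)
    qed
    have "real k * \<alpha> = real (m + r) * \<alpha> + real t * s + real_of_int (int t * p)"
      by (simp add: kk sdef algebra_simps)
    then have "frac (real k * \<alpha>) = frac (real (m + r) * \<alpha> + real t * s)"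
      by (simp only: frac_add_of_int_right)
    then have "t \<in> S r" using k tT by (simp add: S_def)
    then show "k \<in> (\<Union>r\<in>{..<q}. (\<lambda>t. m + r + q * t) ` S r)" using rq kk by blast
  qed
  have "card {k. m \<le> k \<and> k < m + q * T \<and> frac (real k * \<alpha>) \<in> A}
        \<le> card (\<Union>r\<in>{..<q}. (\<lambda>t. m + r + q * t) ` S r)"
    by (rule card_mono[OF _ sub]) (auto simp: S_def)
  also have "\<dots> \<le> (\<Sum>r<q. card ((\<lambda>t. m + r + q * t) ` S r))" by (rule card_UN_le) simp
  also have "\<dots> \<le> (\<Sum>r<q. card (S r))"
    by (intro sum_mono card_image_le) (auto simp: S_def)
  finally have c: "real (card {k. m \<le> k \<and> k < m + q * T \<and> frac (real k * \<alpha>) \<in> A})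
      \<le> (\<Sum>r<q. real (card (S r)))" by (simp flip: of_nat_sum)
  have "real (card {k. m \<le> k \<and> k < m + q * T \<and> frac (real k * \<alpha>) \<in> A}) * \<bar>s\<bar>
        \<le> (\<Sum>r<q. real (card (S r))) * \<bar>s\<bar>" by (rule mult_right_mono[OF c]) simp
  also have "\<dots> = (\<Sum>r<q. real (card (S r)) * \<bar>s\<bar>)" by (simp add: sum_distrib_right)
  also have "\<dots> \<le> (\<Sum>r<q. measure lborel Th)"
    unfolding S_def by (intro sum_mono block_count[OF s0 Ts Th thick fin]) auto
  finally show ?thesis by simp
qed


lemma count_upto:
  fixes P :: "nat \<Rightarrow> bool" and M :: nat and C :: real
  assumes M0: "M > 0" and W: "\<And>m. real (card {k. m \<le> k \<and> k < m + M \<and> P k}) \<le> C"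
  shows "real (card {k. 1 \<le> k \<and> k \<le> n \<and> P k}) \<le> (real (n div M) + 1) * C"
proof -
  have ind: "real (card {k. 1 \<le> k \<and> k < 1 + c * M \<and> P k}) \<le> real c * C" for c
  proof (induction c)
    case 0 then show ?case by simp
  next
    case (Suc c)
    have "{k. 1 \<le> k \<and> k < 1 + Suc c * M \<and> P k} \<subseteq>
          {k. 1 \<le> k \<and> k < 1 + c * M \<and> P k} \<union> {k. 1 + c * M \<le> k \<and> k < (1 + c * M) + M \<and> P k}"
      by auto
    then have "card {k. 1 \<le> k \<and> k < 1 + Suc c * M \<and> P k} \<le>
          card ({k. 1 \<le> k \<and> k < 1 + c * M \<and> P k} \<union> {k. 1 + c * M \<le> k \<and> k < (1 + c * M) + M \<and> P k})"
      by (intro card_mono) auto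
    also have "\<dots> \<le> card {k. 1 \<le> k \<and> k < 1 + c * M \<and> P k} + card {k. 1 + c * M \<le> k \<and> k < (1 + c * M) + M \<and> P k}"
      by (rule card_Un_le)
    finally have "real (card {k. 1 \<le> k \<and> k < 1 + Suc c * M \<and> P k}) \<le>
        real (card {k. 1 \<le> k \<and> k < 1 + c * M \<and> P k}) + real (card {k. 1 + c * M \<le> k \<and> k < (1 + c * M) + M \<and> P k})"
      by linarith
    also have "\<dots> \<le> real c * C + C" using Suc W[of "1 + c * M"] by linarith
    finally show ?case by (simp add: algebra_simps)
  qed
  have "n mod M < M" using M0 by simp
  moreover have "n div M * M + n mod M = n" by (rule div_mult_mod_eq)
  moreover have "(n div M + 1) * M = n div M * M + M" by simp
  ultimately have "n < (n div M + 1) * M" by linarith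
  then have "card {k. 1 \<le> k \<and> k \<le> n \<and> P k} \<le> card {k. 1 \<le> k \<and> k < 1 + (n div M + 1) * M \<and> P k}"
    by (intro card_mono) auto
  then have "real (card {k. 1 \<le> k \<and> k \<le> n \<and> P k}) \<le> real (card {k. 1 \<le> k \<and> k < 1 + (n div M + 1) * M \<and> P k})"
    by simp
  also have "\<dots> \<le> real (n div M + 1) * C" by (rule ind)
  finally show ?thesis by (simp add: add.commute)
qed

definition thick :: "real set \<Rightarrow> real \<Rightarrow> real set" where
  "thick A d = {x + y | x y. x \<in> A \<and> y \<in> cball 0 d}"

lemma thick_compact: "compact A \<Longrightarrow> compact (thick A d)"
  unfolding thick_def by (intro compact_sums) auto

lemma thick_mem: "a \<in> A \<Longrightarrow> 0 \<le> u \<Longrightarrow> u \<le> d \<Longrightarrow> a + u \<in> thick A d"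
  unfolding thick_def by force

lemma thick_mono: "d \<le> e \<Longrightarrow> thick A d \<subseteq> thick A e"
  unfolding thick_def by force

lemma thick_limit:
  assumes "compact A"
  shows "(\<lambda>n. measure lborel (thick A (1 / (real n + 1)))) \<longlonglongrightarrow> measure lborel A"
proof -
  have "(\<lambda>n. measure lborel (thick A (1 / (real n + 1)))) \<longlonglongrightarrow> measure lborel (\<Inter>n. thick A (1 / (real n + 1)))"
  proof (rule Lim_measure_decseq)
    show "range (\<lambda>n. thick A (1 / (real n + 1))) \<subseteq> sets lborel"
      using assms by (auto intro!: borel_compact thick_compact)
    show "decseq (\<lambda>n. thick A (1 / (real n + 1)))"
      by (rule decseq_SucI, rule thick_mono) (simp add: frac_le)
    show "emeasure lborel (thick A (1 / (real n + 1))) \<noteq> \<infinity>" for n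
      using fmeasurable_compact[OF thick_compact[OF assms], of "1 / (real n + 1)"]
      by (simp add: fmeasurable_def less_top)
  qed
  moreover have "(\<Inter>n. thick A (1 / (real n + 1))) = A"
  proof
    show "A \<subseteq> (\<Inter>n. thick A (1 / (real n + 1)))"
      using thick_mem[of _ A 0] by auto
  next
    show "(\<Inter>n. thick A (1 / (real n + 1))) \<subseteq> A"
    proof
      fix x assume x: "x \<in> (\<Inter>n. thick A (1 / (real n + 1)))"
      have ne: "A \<noteq> {}" using x unfolding thick_def by auto
      have le: "infdist x A \<le> 1 / (real n + 1)" for n
      proof -
        from x obtain a y where "x = a + y" "a \<in> A" "y \<in> cball 0 (1 / (real n + 1))"
          unfolding thick_def by blast
        then have "dist x a \<le> 1 / (real n + 1)" by (simp add: dist_real_def)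
        then show ?thesis using infdist_le[OF \<open>a \<in> A\<close>, of x] by linarith
      qed
      have "infdist x A \<le> 0"
      proof (rule field_le_epsilon)
        fix e :: real assume e: "e > 0"
        obtain n :: nat where "1 / e < real n + 1"
          by (metis add.commute add_strict_increasing less_numeral_extra(1) real_arch_simple zero_le_one)
        then have "1 / (real n + 1) < e" using e
          by (simp add: divide_less_eq field_simps)
        then show "infdist x A \<le> 0 + e" using le[of n] by simp
      qed
      then have "infdist x A = 0" using infdist_nonneg[of x A] by linarith
      then have "x \<in> closure A" using in_closure_iff_infdist_zero[OF ne] by simp
      then show "x \<in> A" using assms by (simp add: compact_imp_closed closure_closed)
    qed
  qed
  ultimately show ?thesis by simp
qed


lemma ratio_limsup:
  fixes f :: "nat \<Rightarrow> real"
  assumes "\<And>n. f n \<le> b + d / real n"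
  shows "limsup (\<lambda>n. ereal (f n)) \<le> ereal b"
proof -
  have "limsup (\<lambda>n. ereal (f n)) \<le> limsup (\<lambda>n. ereal (b + d / real n))"
    by (rule Limsup_mono) (use assms in auto)
  also have "\<dots> = ereal b"
  proof (rule lim_imp_Limsup)
    show "((\<lambda>n. ereal (b + d / real n)) \<longlongrightarrow> ereal b) sequentially"
      using tendsto_add[OF tendsto_const lim_const_over_n[of d], of b]
      by (intro tendsto_intros) simp
  qed simp
  finally show ?thesis .
qed

lemma density_bound_eps:
  fixes K F :: "nat set" and A :: "real set" and \<rho> \<alpha> \<epsilon> :: real
  assumes ud: "upper_density K = ereal \<rho>" and irr: "\<alpha> \<notin> \<rat>" and cA: "compact A"
    and sub: "K \<subseteq> {k. frac (real k * \<alpha>) \<in> A} \<union> F" and finF: "finite F"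
    and e0: "0 < \<epsilon>" and e1: "\<epsilon> < 1/2"
  shows "\<rho> * (1 - \<epsilon>) \<le> measure lborel A + \<epsilon>"
proof -
  define L where "L = measure lborel A"
  have "eventually (\<lambda>n. measure lborel (thick A (1 / (real n + 1))) < L + \<epsilon>) sequentially"
    using thick_limit[OF cA] e0 unfolding L_def by (intro order_tendstoD(2)) auto
  then obtain n0 where n0: "measure lborel (thick A (1 / (real n0 + 1))) < L + \<epsilon>"
    by (meson eventually_sequentially order.refl)
  define Th where "Th = thick A (1 / (real n0 + 1))"
  define \<eta> where "\<eta> = min (1 / (real n0 + 1)) \<epsilon>"
  have \<eta>0: "\<eta> > 0" using e0 by (simp add: \<eta>_def)
  obtain N0 :: nat where "inverse (real (Suc N0)) < \<eta>" using reals_Archimedean[OF \<eta>0] by blast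
  define N where "N = Suc N0"
  have N0: "N > 0" and Nh: "1 / real N < \<eta>"
    using \<open>inverse (real (Suc N0)) < \<eta>\<close> by (auto simp: N_def inverse_eq_divide)
  obtain h k where hk: "0 < k" "\<bar>of_int k * \<alpha> - of_int h\<bar> < 1 / real N"
    using Dirichlet_approx[OF N0, of \<alpha>] by blast
  define q where "q = nat k"
  have qk: "real q = of_int k" using hk by (simp add: q_def)
  have q0: "q > 0" using hk by (simp add: q_def)
  define s where "s = real q * \<alpha> - real_of_int h"
  have s0: "s \<noteq> 0"
  proof
    assume "s = 0"
    then have "\<alpha> = of_int h / of_int k" using hk qk by (simp add: s_def field_simps)
    then have "\<alpha> \<in> \<rat>" by simp
    with irr show False by simp
  qed
  define \<delta> where "\<delta> = \<bar>s\<bar>"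
  have d0: "\<delta> > 0" using s0 by (simp add: \<delta>_def)
  have d\<eta>: "\<delta> < \<eta>" using hk Nh qk by (simp add: \<delta>_def s_def)
  have de: "\<delta> < \<epsilon>" and dn: "\<delta> \<le> 1 / (real n0 + 1)" using d\<eta> by (auto simp: \<eta>_def)
  define T where "T = nat \<lfloor>1 / \<delta>\<rfloor>"
  have Tfl: "real T = of_int \<lfloor>1 / \<delta>\<rfloor>" using d0 by (simp add: T_def)
  have T1: "real T * \<delta> \<le> 1"
  proof -
    have "real T \<le> 1 / \<delta>" using Tfl by linarith
    then show ?thesis using d0 by (simp add: field_simps)
  qed
  have T2: "real T * \<delta> \<ge> 1 - \<delta>"
  proof -
    have "real T \<ge> 1 / \<delta> - 1" using Tfl by linarith
    then have "real T * \<delta> \<ge> (1 / \<delta> - 1) * \<delta>" using d0 by (intro mult_right_mono) auto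
    moreover have "(1 / \<delta> - 1) * \<delta> = 1 - \<delta>" using d0 by (simp add: field_simps)
    ultimately show ?thesis by linarith
  qed
  have T0: "T > 0"
  proof (rule ccontr)
    assume "\<not> T > 0" then have "T = 0" by simp
    with T2 have "1 - \<delta> \<le> 0" by simp
    with de e1 show False by simp
  qed
  have Thm: "Th \<in> sets lborel" unfolding Th_def using cA by (auto intro!: borel_compact thick_compact)
  have Thf: "emeasure lborel Th < \<infinity>"
    using fmeasurable_compact[OF thick_compact[OF cA], of "1 / (real n0 + 1)"]
    by (simp add: fmeasurable_def Th_def)
  have thickP: "a + u \<in> Th" if "a \<in> A" "0 \<le> u" "u \<le> \<bar>s\<bar>" for a u
    unfolding Th_def using that dn by (intro thick_mem) (auto simp: \<delta>_def)
  define C where "C = real q * (L + \<epsilon>) / \<delta>"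
  define M where "M = q * T"
  have M0: "M > 0" using q0 T0 by (simp add: M_def)
  have W: "real (card {k. m \<le> k \<and> k < m + M \<and> frac (real k * \<alpha>) \<in> A}) \<le> C" for m
  proof -
    have "real (card {k. m \<le> k \<and> k < m + q * T \<and> frac (real k * \<alpha>) \<in> A}) * \<delta>
           \<le> real q * measure lborel Th"
      unfolding \<delta>_def by (rule window_count[OF s_def s0 T1[unfolded \<delta>_def] Thm thickP Thf])
    also have "\<dots> \<le> real q * (L + \<epsilon>)" using n0 by (intro mult_left_mono) (auto simp: Th_def)
    finally show ?thesis using d0 by (simp add: C_def M_def field_simps)
  qed
  have L0: "L \<ge> 0" by (simp add: L_def)
  have CM: "C / real M \<le> (L + \<epsilon>) / (1 - \<epsilon>)"
  proof -
    have "C / real M = (L + \<epsilon>) / (real T * \<delta>)"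
      using q0 d0 T0 by (simp add: C_def M_def field_simps)
    also have "\<dots> \<le> (L + \<epsilon>) / (1 - \<epsilon>)"
      using L0 e0 e1 T2 de by (intro divide_left_mono) auto
    finally show ?thesis .
  qed
  have C0: "C \<ge> 0" using L0 e0 d0 by (simp add: C_def)
  define b where "b = (L + \<epsilon>) / (1 - \<epsilon>)"
  define d where "d = real (card F) + C"
  have bound: "real (card (K \<inter> {1..n})) / real n \<le> b + d / real n" for n
  proof (cases "n = 0")
    case True then show ?thesis using L0 e0 e1 by (simp add: b_def)
  next
    case False
    have "K \<inter> {1..n} \<subseteq> {k. 1 \<le> k \<and> k \<le> n \<and> frac (real k * \<alpha>) \<in> A} \<union> F" using sub by auto
    then have "card (K \<inter> {1..n}) \<le> card ({k. 1 \<le> k \<and> k \<le> n \<and> frac (real k * \<alpha>) \<in> A} \<union> F)"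
      using finF by (intro card_mono) auto
    also have "\<dots> \<le> card {k. 1 \<le> k \<and> k \<le> n \<and> frac (real k * \<alpha>) \<in> A} + card F" by (rule card_Un_le)
    finally have c1: "real (card (K \<inter> {1..n})) \<le> real (card {k. 1 \<le> k \<and> k \<le> n \<and> frac (real k * \<alpha>) \<in> A}) + real (card F)"
      by linarith
    have c2: "real (card {k. 1 \<le> k \<and> k \<le> n \<and> frac (real k * \<alpha>) \<in> A}) \<le> (real (n div M) + 1) * C"
      by (rule count_upto[OF M0 W])
    have c3: "real (n div M) * C \<le> real n / real M * C"
    proof (rule mult_right_mono[OF _ C0])
      have "real (n div M) * real M \<le> real n"
      proof -
        have "n div M * M \<le> n" by (rule div_times_less_eq_dividend)
        then show ?thesis by (metis of_nat_le_iff of_nat_mult)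
      qed
      then show "real (n div M) \<le> real n / real M" using M0 by (simp add: field_simps)
    qed
    have "real (card (K \<inter> {1..n})) \<le> real n * (C / real M) + d"
      using c1 c2 c3 by (simp add: d_def algebra_simps)
    also have "\<dots> \<le> real n * b + d" using CM False by (intro add_right_mono mult_left_mono) (auto simp: b_def)
    finally show ?thesis using False by (simp add: field_simps)
  qed
  have "ereal \<rho> \<le> ereal b"
    using ratio_limsup[of "\<lambda>n. real (card (K \<inter> {1..n})) / real n", OF bound] ud
    by (simp add: upper_density_def)
  then have "\<rho> \<le> b" by simp
  then show ?thesis using e1 by (simp add: b_def L_def field_simps)
qed


lemma density_bound:
  fixes K F :: "nat set" and A :: "real set" and \<rho> \<alpha> :: real
  assumes ud: "upper_density K = ereal \<rho>" and irr: "\<alpha> \<notin> \<rat>" and cA: "compact A"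
    and sub: "K \<subseteq> {k. frac (real k * \<alpha>) \<in> A} \<union> F" and finF: "finite F"
  shows "\<rho> \<le> measure lborel A"
proof (rule ccontr)
  define L where "L = measure lborel A"
  assume "\<not> \<rho> \<le> measure lborel A"
  then have rL: "\<rho> > L" by (simp add: L_def)
  have L0: "L \<ge> 0" by (simp add: L_def)
  define \<epsilon> where "\<epsilon> = min (1/4) ((\<rho> - L) / (2 * (\<rho> + 1)))"
  have e0: "\<epsilon> > 0" using rL L0 by (simp add: \<epsilon>_def)
  have e1: "\<epsilon> < 1/2" by (simp add: \<epsilon>_def)
  have "\<rho> * (1 - \<epsilon>) \<le> L + \<epsilon>"
    unfolding L_def by (rule density_bound_eps[OF ud irr cA sub finF e0 e1])
  then have "\<rho> - L \<le> \<epsilon> * (\<rho> + 1)" by (simp add: algebra_simps)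
  also have "\<dots> \<le> (\<rho> - L) / (2 * (\<rho> + 1)) * (\<rho> + 1)"
    using rL L0 by (intro mult_right_mono) (auto simp: \<epsilon>_def)
  also have "\<dots> = (\<rho> - L) / 2" using rL L0 by (simp add: field_simps)
  finally show False using rL by simp
qed

lemma part1:
  fixes K :: "nat set" and \<rho> \<alpha> :: real
  assumes "upper_density K = ereal \<rho>" and "\<alpha> \<notin> \<rat>"
  shows "measure lborel (A_set K \<alpha>) \<ge> \<rho>"
proof (rule density_bound[OF assms, where F = "{}"])
  have "(\<lambda>k. frac (real k * \<alpha>)) ` K \<subseteq> cbox 0 1"
    by (auto simp: less_imp_le[OF frac_lt_1])
  then have "bounded (A_set K \<alpha>)" unfolding A_set_def
    by (meson bounded_cbox bounded_closure bounded_subset)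
  then show "compact (A_set K \<alpha>)" by (simp add: A_set_def compact_eq_bounded_closed)
  show "K \<subseteq> {k. frac (real k * \<alpha>) \<in> A_set K \<alpha>} \<union> {}"
    unfolding A_set_def using closure_subset[of "(\<lambda>k. frac (real k * \<alpha>)) ` K"] by auto
qed simp


lemma space_bern[simp]: "space (bernoulli_measure p) = UNIV"
  by (simp add: bernoulli_measure_def space_PiM)

lemma prob_space_bern: "prob_space (bernoulli_measure p)"
  unfolding bernoulli_measure_def by (rule prob_space_PiM) (simp add: prob_space_measure_pmf)

lemma pps_bern: "product_prob_space (\<lambda>_::nat. measure_pmf p)"
  by unfold_locales

lemma cyl_measure:
  fixes p :: "'a pmf" and D :: "nat set" and c :: "nat \<Rightarrow> 'a"
  assumes "finite D"
  shows "emeasure (bernoulli_measure p) {\<omega>. \<forall>i\<in>D. \<omega> i = c i} = (\<Prod>i\<in>D. ennreal (pmf p (c i)))"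
proof -
  have "emeasure (bernoulli_measure p) {x \<in> space (bernoulli_measure p). \<forall>i\<in>D. x i \<in> {c i}}
     = (\<Prod>i\<in>D. emeasure (measure_pmf p) {c i})"
    unfolding bernoulli_measure_def
    by (rule product_prob_space.emeasure_PiM_Collect[OF pps_bern]) (use assms in auto)
  then show ?thesis by (simp add: emeasure_pmf_single)
qed

lemma shift_pow: "(shift ^^ k) \<omega> = (\<lambda>i. \<omega> (k + i))"
  by (induction k arbitrary: \<omega>) (auto simp: shift_def)


lemma coord_indep:
  "prob_space.indep_vars (bernoulli_measure p) (\<lambda>_. measure_pmf p) (\<lambda>i \<omega>. \<omega> i) (UNIV :: nat set)"
proof -
  interpret B: prob_space "bernoulli_measure p" by (rule prob_space_bern)
  have rv: "(\<lambda>\<omega>. \<omega> i) \<in> measurable (bernoulli_measure p) (measure_pmf p)" for i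
    unfolding bernoulli_measure_def by (rule measurable_component_singleton) simp
  show ?thesis
  proof (subst B.indep_vars_iff_distr_eq_PiM[OF _ rv])
    have "distr (bernoulli_measure p) (measure_pmf p) (\<lambda>\<omega>. \<omega> i) = measure_pmf p" for i
      unfolding bernoulli_measure_def
      by (rule product_prob_space.PiM_component[OF pps_bern]) simp
    moreover have "distr (bernoulli_measure p) (\<Pi>\<^sub>M i\<in>UNIV. measure_pmf p) (\<lambda>x. \<lambda>i\<in>UNIV. x i)
        = bernoulli_measure p"
      unfolding bernoulli_measure_def by (simp add: restrict_UNIV distr_id2)
    ultimately show "distr (bernoulli_measure p) (\<Pi>\<^sub>M i\<in>UNIV. measure_pmf p) (\<lambda>x. \<lambda>i\<in>UNIV. x i) =
      (\<Pi>\<^sub>M i\<in>UNIV. distr (bernoulli_measure p) (measure_pmf p) (\<lambda>\<omega>. \<omega> i))"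
      by (simp add: bernoulli_measure_def)
  qed simp
qed


lemma gap_seq:
  fixes J :: "nat set" and N :: nat
  assumes "infinite J"
  obtains g :: "nat \<Rightarrow> nat" where "\<And>j. g j \<in> J" "\<And>j j'. j < j' \<Longrightarrow> g j + N \<le> g j'"
proof -
  have ex: "\<exists>k\<in>J. m \<le> k" for m using assms unfolding infinite_nat_iff_unbounded_le by blast
  define g where "g = rec_nat (SOME k. k \<in> J) (\<lambda>_ x. SOME k. k \<in> J \<and> x + N \<le> k)"
  have g0: "g 0 \<in> J" unfolding g_def using ex[of 0] by (auto simp: some_in_eq)
  have gS: "g (Suc j) \<in> J \<and> g j + N \<le> g (Suc j)" for j
  proof -
    have "g (Suc j) = (SOME k. k \<in> J \<and> g j + N \<le> k)" by (simp add: g_def)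
    moreover have "\<exists>k. k \<in> J \<and> g j + N \<le> k" using ex[of "g j + N"] by blast
    then have "(SOME k. k \<in> J \<and> g j + N \<le> k) \<in> J \<and> g j + N \<le> (SOME k. k \<in> J \<and> g j + N \<le> k)"
      by (rule someI_ex)
    ultimately show ?thesis by simp
  qed
  have gJ: "g j \<in> J" for j by (cases j) (use g0 gS in auto)
  have gl: "j < j' \<Longrightarrow> g j + N \<le> g j'" for j j'
  proof (induction j')
    case 0 then show ?case by simp
  next
    case (Suc j')
    show ?case
    proof (cases "j = j'")
      case True then show ?thesis using gS by simp
    next
      case False
      then have "g j + N \<le> g j'" using Suc by simp
      then show ?thesis using gS[of j'] by simp
    qed
  qed
  show ?thesis by (rule that[OF gJ gl])
qed

lemma hit_infinite:
  fixes p :: "'a pmf" and J :: "nat set" and c :: "nat \<Rightarrow> 'a" and N :: nat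
  assumes full: "set_pmf p = UNIV" and inf: "infinite J"
  shows "AE \<omega> in bernoulli_measure p. \<exists>k\<in>J. \<forall>i<N. \<omega> (k + i) = c i"
proof -
  interpret B: prob_space "bernoulli_measure p" by (rule prob_space_bern)
  obtain g :: "nat \<Rightarrow> nat" where gJ: "\<And>j. g j \<in> J" and gl: "\<And>j j'. j < j' \<Longrightarrow> g j + N \<le> g j'"
    using gap_seq[OF inf] by blast
  define D where "D j = {g j..<g j + N}" for j
  define E where "E j = {\<omega>. \<forall>i\<in>D j. \<omega> i = c (i - g j)}" for j
  define P where "P = (\<Prod>i<N. pmf p (c i))"
  have disj: "disjoint_family D"
    unfolding disjoint_family_on_def D_def
  proof (intro ballI impI)
    fix j j' :: nat assume "j \<noteq> j'"
    then show "{g j..<g j + N} \<inter> {g j'..<g j' + N} = {}"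
      using gl[of j j'] gl[of j' j] by (cases "j < j'") auto
  qed
  have ind: "B.indep_vars (\<lambda>j. PiM (D j) (\<lambda>_. measure_pmf p)) (\<lambda>j \<omega>. restrict (\<lambda>i. \<omega> i) (D j)) UNIV"
    by (rule B.indep_vars_restrict[OF coord_indep]) (use disj in auto)
  have PE: "B.prob (E j) = P" for j
  proof -
    have "emeasure (bernoulli_measure p) (E j) = (\<Prod>i\<in>D j. ennreal (pmf p (c (i - g j))))"
      unfolding E_def by (rule cyl_measure) (simp add: D_def)
    also have "\<dots> = ennreal (\<Prod>i\<in>D j. pmf p (c (i - g j)))" by (simp add: prod_ennreal)
    also have "(\<Prod>i\<in>D j. pmf p (c (i - g j))) = P"
    proof -
      have "(\<Prod>i\<in>D j. pmf p (c (i - g j))) = (\<Prod>i\<in>{0 + g j..<N + g j}. pmf p (c (i - g j)))"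
        by (simp add: D_def add.commute)
      also have "\<dots> = (\<Prod>i\<in>{0..<N}. pmf p (c i))" by (subst prod.shift_bounds_nat_ivl) simp
      finally show ?thesis by (simp add: P_def lessThan_atLeast0)
    qed
    finally show ?thesis
      by (simp add: B.emeasure_eq_measure P_def prod_nonneg)
  qed
  have P0: "P > 0" unfolding P_def using full
    by (intro prod_pos) (auto simp: pmf_positive_iff)
  have P1: "P \<le> 1"
    using PE[of 0] B.prob_le_1 by metis
  have Ev: "E j \<in> B.events" for j
  proof -
    have "E j = {x \<in> space (bernoulli_measure p). \<forall>i\<in>D j. x i \<in> {c (i - g j)}}"
      by (auto simp: E_def)
    also have "\<dots> \<in> B.events" unfolding bernoulli_measure_def
      by (rule sets.sets_Collect_finite_All) (auto simp: D_def)
    finally show ?thesis .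
  qed
  have prodM: "B.prob (\<Inter>j\<in>{..<Suc M}. UNIV - E j) = (1 - P) ^ Suc M" for M
  proof -
    have sets: "UNIV - E j \<in> {(\<lambda>\<omega>. restrict (\<lambda>i. \<omega> i) (D j)) -` A \<inter> space (bernoulli_measure p) |A.
             A \<in> sets (PiM (D j) (\<lambda>_. measure_pmf p))}" for j
    proof -
      define A where "A = space (PiM (D j) (\<lambda>_. measure_pmf p)) - PiE (D j) (\<lambda>i. {c (i - g j)})"
      have "A \<in> sets (PiM (D j) (\<lambda>_. measure_pmf p))"
        unfolding A_def by (intro sets.compl_sets sets_PiM_I_finite) (auto simp: D_def)
      moreover have "UNIV - E j = (\<lambda>\<omega>. restrict (\<lambda>i. \<omega> i) (D j)) -` A \<inter> space (bernoulli_measure p)"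
        by (auto simp: A_def E_def space_PiM PiE_iff)
      ultimately show ?thesis by blast
    qed
    have "B.prob (\<Inter>j\<in>{..<Suc M}. UNIV - E j) = (\<Prod>j\<in>{..<Suc M}. B.prob (UNIV - E j))"
      using ind unfolding B.indep_vars_def
      by (intro B.indep_setsD[where I = UNIV]) (use sets in auto)
    also have "\<dots> = (\<Prod>j\<in>{..<Suc M}. 1 - P)"
      using B.prob_compl[OF Ev] PE by simp
    finally show ?thesis by simp
  qed
  define Z where "Z = (\<Inter>j. UNIV - E j)"
  have Zev: "Z \<in> B.events"
  proof -
    have "(\<Union>j. E j) \<in> B.events" using Ev by auto
    then have "space (bernoulli_measure p) - (\<Union>j. E j) \<in> B.events" by (rule sets.compl_sets)
    then show ?thesis by (simp add: Z_def)
  qed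
  have "B.prob Z \<le> (1 - P) ^ Suc M" for M
  proof -
    have "Z \<subseteq> (\<Inter>j\<in>{..<Suc M}. UNIV - E j)" unfolding Z_def by auto
    moreover have "(\<Inter>j\<in>{..<Suc M}. UNIV - E j) \<in> B.events"
    proof -
      have "(\<Union>j\<in>{..<Suc M}. E j) \<in> B.events" using Ev by auto
      then have "space (bernoulli_measure p) - (\<Union>j\<in>{..<Suc M}. E j) \<in> B.events" by (rule sets.compl_sets)
      moreover have "space (bernoulli_measure p) - (\<Union>j\<in>{..<Suc M}. E j) = (\<Inter>j\<in>{..<Suc M}. UNIV - E j)" by auto
      ultimately show ?thesis by simp
    qed
    ultimately have "B.prob Z \<le> B.prob (\<Inter>j\<in>{..<Suc M}. UNIV - E j)"
      by (intro B.finite_measure_mono)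
    then show ?thesis using prodM by simp
  qed
  moreover have "(\<lambda>M. (1 - P) ^ Suc M) \<longlonglongrightarrow> 0"
    using P0 P1 by (intro LIMSEQ_Suc LIMSEQ_power_zero) auto
  ultimately have "B.prob Z \<le> 0"
    by (intro tendsto_lowerbound[where F = sequentially]) (auto intro: always_eventually)
  then have "B.prob Z = 0" using measure_nonneg[of "bernoulli_measure p" Z] by linarith
  then have "AE \<omega> in bernoulli_measure p. \<omega> \<notin> Z" using B.prob_eq_0[OF Zev] by simp
  then show ?thesis
  proof (rule AE_mp, intro AE_I2 impI)
    fix \<omega> assume "\<omega> \<notin> Z"
    then obtain j where "\<omega> \<in> E j" by (auto simp: Z_def)
    then have "\<forall>i<N. \<omega> (g j + i) = c i" by (auto simp: E_def D_def)
    then show "\<exists>k\<in>J. \<forall>i<N. \<omega> (k + i) = c i" using gJ by blast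
  qed
qed


lemma cyl_sets:
  fixes p :: "'a pmf" and D :: "nat set" and c :: "nat \<Rightarrow> 'a"
  assumes "finite D"
  shows "{\<omega>. \<forall>i\<in>D. \<omega> i = c i} \<in> sets (bernoulli_measure p)"
proof -
  have "{\<omega>. \<forall>i\<in>D. \<omega> i = c i} = {x \<in> space (bernoulli_measure p). \<forall>i\<in>D. x i \<in> {c i}}"
    by auto
  also have "\<dots> \<in> sets (bernoulli_measure p)" unfolding bernoulli_measure_def
    by (rule sets.sets_Collect_finite_All) (use assms in auto)
  finally show ?thesis .
qed

lemma cyl_sets_lt: "{\<omega>. \<forall>i<N. \<omega> i = c i} \<in> sets (bernoulli_measure p)"
proof -
  have "{\<omega>. \<forall>i<N. \<omega> i = c i} = {\<omega>. \<forall>i\<in>{..<N}. \<omega> i = c i}" by auto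
  then show ?thesis using cyl_sets[of "{..<N}" c p] by simp
qed

lemma cyl_measure_real:
  fixes p :: "'a pmf" and N :: nat and c :: "nat \<Rightarrow> 'a"
  shows "measure (bernoulli_measure p) {\<omega>. \<forall>i<N. \<omega> i = c i} = (\<Prod>i<N. pmf p (c i))"
proof -
  interpret B: prob_space "bernoulli_measure p" by (rule prob_space_bern)
  have "emeasure (bernoulli_measure p) {\<omega>. \<forall>i\<in>{..<N}. \<omega> i = c i} = ennreal (\<Prod>i<N. pmf p (c i))"
    by (subst cyl_measure) (auto simp: prod_ennreal)
  moreover have "{\<omega>. \<forall>i<N. \<omega> i = c i} = {\<omega>. \<forall>i\<in>{..<N}. \<omega> i = c i}" by auto
  ultimately show ?thesis by (simp add: B.emeasure_eq_measure prod_nonneg)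
qed

lemma singleton_null:
  fixes p :: "'a::finite pmf" and \<omega>0 :: "nat \<Rightarrow> 'a"
  assumes full: "set_pmf p = UNIV" and two: "CARD('a) \<ge> 2"
  shows "emeasure (bernoulli_measure p) {\<omega>0} = 0"
proof -
  interpret B: prob_space "bernoulli_measure p" by (rule prob_space_bern)
  define m where "m = Max (range (pmf p))"
  have lt1: "pmf p x < 1" for x
  proof -
    obtain y :: 'a where "y \<noteq> x"
    proof -
      have "\<not> (UNIV :: 'a set) \<subseteq> {x}"
      proof
        assume "(UNIV :: 'a set) \<subseteq> {x}"
        then have "card (UNIV :: 'a set) \<le> card {x}" by (intro card_mono) auto
        with two show False by simp
      qed
      then show ?thesis using that by blast
    qed
    have "pmf p y > 0" using full by (simp add: pmf_positive_iff)
    moreover have "measure_pmf.prob p {x, y} = pmf p x + pmf p y"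
      using \<open>y \<noteq> x\<close> by (simp add: measure_pmf_conv_infsetsum infsetsum_finite sum.insert)
    moreover have "measure_pmf.prob p {x, y} \<le> 1" by simp
    ultimately show ?thesis by linarith
  qed
  have m1: "m < 1" unfolding m_def using lt1 by (subst Max_less_iff) auto
  have m0: "m \<ge> 0" unfolding m_def by (rule order_trans[OF pmf_nonneg Max_ge]) auto
  have le: "measure (bernoulli_measure p) {\<omega>0} \<le> m ^ N" for N
  proof -
    have "measure (bernoulli_measure p) {\<omega>0} \<le> measure (bernoulli_measure p) {\<omega>. \<forall>i<N. \<omega> i = \<omega>0 i}"
      using cyl_sets_lt[of N \<omega>0 p] by (intro B.finite_measure_mono) auto
    also have "\<dots> = (\<Prod>i<N. pmf p (\<omega>0 i))" by (rule cyl_measure_real)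
    also have "\<dots> \<le> (\<Prod>i<N. m)" unfolding m_def by (intro prod_mono) auto
    finally show ?thesis by simp
  qed
  have "(\<lambda>N. m ^ N) \<longlonglongrightarrow> 0" using m0 m1 by (intro LIMSEQ_power_zero) auto
  then have "measure (bernoulli_measure p) {\<omega>0} \<le> 0"
    using le by (intro tendsto_lowerbound[where F = sequentially]) (auto intro: always_eventually)
  then have "measure (bernoulli_measure p) {\<omega>0} = 0"
    using measure_nonneg[of "bernoulli_measure p" "{\<omega>0}"] by linarith
  then show ?thesis by (simp add: B.emeasure_eq_measure)
qed


lemma dist_bound:
  fixes \<omega>0 \<omega> :: "nat \<Rightarrow> 'a::finite" and N :: nat
  assumes two: "CARD('a) \<ge> 2" and cyl: "\<forall>i<N. \<omega> i = \<omega>0 i"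
  shows "seq_dist \<omega>0 \<omega> \<le> 1 / (real N + 1)"
proof (cases "\<omega>0 = \<omega>")
  case True then show ?thesis by (simp add: seq_dist_def)
next
  case False
  define L where "L = (LEAST i. \<omega>0 i \<noteq> \<omega> i)"
  have ex: "\<exists>i. \<omega>0 i \<noteq> \<omega> i" using False by auto
  have LN: "N \<le> L"
  proof (rule ccontr)
    assume "\<not> N \<le> L"
    then have "L < N" by simp
    moreover have "\<omega>0 L \<noteq> \<omega> L" unfolding L_def by (rule LeastI_ex[OF ex])
    ultimately show False using cyl by auto
  qed
  define c where "c = real CARD('a)"
  have c2: "c \<ge> 2" using two by (simp add: c_def)
  have "seq_dist \<omega>0 \<omega> = c powr (- (real L + 1))"
    using False by (simp add: seq_dist_def L_def c_def)
  also have "\<dots> = 1 / c ^ (Suc L)"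
  proof -
    have e: "real L + 1 = real (Suc L)" by simp
    have c0: "c > 0" using c2 by simp
    show ?thesis unfolding e powr_minus powr_realpow[OF c0] by (simp add: divide_inverse)
  qed
  also have "\<dots> \<le> 1 / (real N + 1)"
  proof (rule divide_left_mono)
    have "real (Suc L) < 2 ^ Suc L" by (rule of_nat_less_two_power)
    also have "(2::real) ^ Suc L \<le> c ^ Suc L" using c2 by (intro power_mono) auto
    finally show "real N + 1 \<le> c ^ Suc L" using LN by simp
    have "c ^ Suc L > 0" using c2 by simp
    then show "0 < c ^ Suc L * (real N + 1)" by simp
  qed simp
  finally show ?thesis .
qed

lemma ball_cyl:
  fixes p :: "'a::finite pmf" and \<omega>0 :: "nat \<Rightarrow> 'a" and r :: real
  assumes hB: "B = seq_ball \<omega>0 r \<or> B = seq_cball \<omega>0 r"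
    and pos: "emeasure (bernoulli_measure p) B > 0" and full: "set_pmf p = UNIV"
  shows "\<exists>N. {\<omega>. \<forall>i<N. \<omega> i = \<omega>0 i} \<subseteq> B"
proof (cases "CARD('a) \<ge> 2")
  case False
  then have "card (UNIV :: 'a set) \<le> Suc 0" by simp
  then have one: "\<And>x y :: 'a. x = y" using card_le_Suc0_iff_eq[of "UNIV :: 'a set"] by auto
  have "B \<noteq> {}" using pos by auto
  then obtain \<omega> where "\<omega> \<in> B" by auto
  moreover have "\<omega>' = \<omega>" for \<omega>' :: "nat \<Rightarrow> 'a" using one by (intro ext) auto
  ultimately have "\<omega>' \<in> B" for \<omega>' :: "nat \<Rightarrow> 'a" by metis
  then show ?thesis by blast
next
  case True
  have dpos: "seq_dist \<omega>0 \<omega> > 0" if "\<omega> \<noteq> \<omega>0" for \<omega>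
    using that True by (auto simp: seq_dist_def)
  show ?thesis
  proof (cases "r > 0")
    case True
    obtain N :: nat where N: "inverse (real (Suc N)) < r" using reals_Archimedean[OF True] by blast
    have "{\<omega>. \<forall>i<N. \<omega> i = \<omega>0 i} \<subseteq> B"
    proof
      fix \<omega> assume "\<omega> \<in> {\<omega>. \<forall>i<N. \<omega> i = \<omega>0 i}"
      then have "seq_dist \<omega>0 \<omega> \<le> 1 / (real N + 1)"
        using dist_bound[OF \<open>CARD('a) \<ge> 2\<close>] by auto
      then have "seq_dist \<omega>0 \<omega> < r" using N by (simp add: inverse_eq_divide add.commute)
      then show "\<omega> \<in> B" using hB by (auto simp: seq_ball_def seq_cball_def)
    qed
    then show ?thesis by blast
  next
    case False
    have sub: "B \<subseteq> {\<omega>0}"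
    proof
      fix \<omega> assume "\<omega> \<in> B"
      then have "seq_dist \<omega>0 \<omega> \<le> 0" using hB False by (auto simp: seq_ball_def seq_cball_def)
      then show "\<omega> \<in> {\<omega>0}" using dpos[of \<omega>] by force
    qed
    have "emeasure (bernoulli_measure p) B = 0"
    proof (cases "B = {}")
      case True then show ?thesis by simp
    next
      case False
      then have "B = {\<omega>0}" using sub by auto
      then show ?thesis using singleton_null[OF full \<open>CARD('a) \<ge> 2\<close>] by simp
    qed
    with pos show ?thesis by simp
  qed
qed


lemma A_set_compact: "compact (A_set K \<alpha>)"
proof -
  have "(\<lambda>k. frac (real k * \<alpha>)) ` K \<subseteq> cbox 0 1"
    by (auto simp: less_imp_le[OF frac_lt_1])
  then have "bounded (A_set K \<alpha>)" unfolding A_set_def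
    by (meson bounded_cbox bounded_closure bounded_subset)
  then show "compact (A_set K \<alpha>)" by (simp add: A_set_def compact_eq_bounded_closed)
qed

lemma A_set_mem: "k \<in> K \<Longrightarrow> frac (real k * \<alpha>) \<in> A_set K \<alpha>"
  unfolding A_set_def using closure_subset[of "(\<lambda>k. frac (real k * \<alpha>)) ` K"] by auto

definition FF :: "rat set \<times> nat \<Rightarrow> real set" where
  "FF Pm = (\<Union>x\<in>fst Pm. cball (real_of_rat x) (1 / (real (snd Pm) + 1)))"

lemma FF_compact: "finite (fst Pm) \<Longrightarrow> compact (FF Pm)"
  unfolding FF_def by (intro compact_UN) auto

lemma approx_FF:
  fixes A :: "real set" and \<rho> :: real
  assumes cA: "compact A" and lt: "measure lborel A < \<rho>"
  shows "\<exists>Pm. finite (fst Pm) \<and> A \<subseteq> FF Pm \<and> measure lborel (FF Pm) < \<rho>"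
proof -
  have "eventually (\<lambda>n. measure lborel (thick A (1 / (real n + 1))) < \<rho>) sequentially"
    using thick_limit[OF cA] lt by (intro order_tendstoD(2)) auto
  then obtain n where n: "measure lborel (thick A (1 / (real n + 1))) < \<rho>"
    by (meson eventually_sequentially order.refl)
  define m where "m = 2 * n + 1"
  define e where "e = 1 / (real m + 1)"
  have e0: "e > 0" by (simp add: e_def)
  have e2: "2 * e = 1 / (real n + 1)" by (simp add: e_def m_def field_simps)
  define C where "C = {x::rat. ball (real_of_rat x) e \<inter> A \<noteq> {}}"
  have cover: "A \<subseteq> (\<Union>x\<in>C. ball (real_of_rat x) e)"
  proof
    fix a assume a: "a \<in> A"
    obtain r where r: "r \<in> \<rat>" "a - e < r" "r < a" using Rats_dense_in_real[of "a - e" a] e0 by auto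
    obtain x where x: "r = real_of_rat x" using r(1) by (auto elim: Rats_cases)
    have "a \<in> ball (real_of_rat x) e" using r x by (auto simp: dist_real_def)
    moreover then have "x \<in> C" using a unfolding C_def by blast
    ultimately show "a \<in> (\<Union>x\<in>C. ball (real_of_rat x) e)" by blast
  qed
  obtain C' where C': "C' \<subseteq> C" "finite C'" "A \<subseteq> (\<Union>x\<in>C'. ball (real_of_rat x) e)"
    by (rule compactE_image[OF cA _ cover]) auto
  define Pm where "Pm = (C', m)"
  have "A \<subseteq> FF Pm"
  proof
    fix a assume "a \<in> A"
    then obtain x where "x \<in> C'" "a \<in> ball (real_of_rat x) e" using C'(3) by blast
    then show "a \<in> FF Pm" unfolding FF_def Pm_def by (intro UN_I[of x]) (auto simp: e_def)
  qed
  moreover have sub: "FF Pm \<subseteq> thick A (1 / (real n + 1))"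
  proof
    fix y assume "y \<in> FF Pm"
    then obtain x where x: "x \<in> C'" "dist (real_of_rat x) y \<le> e" by (auto simp: FF_def Pm_def e_def)
    have "x \<in> C" using x(1) C'(1) by blast
    then obtain a where a: "a \<in> A" "dist (real_of_rat x) a < e" unfolding C_def by auto
    have "dist a y \<le> 2 * e" using x(2) a(2) dist_triangle[of a y "real_of_rat x"]
      by (simp add: dist_commute)
    then have "y - a \<in> cball 0 (1 / (real n + 1))" using e2 by (simp add: dist_real_def)
    then show "y \<in> thick A (1 / (real n + 1))" unfolding thick_def using a(1) by force
  qed
  moreover have "measure lborel (FF Pm) \<le> measure lborel (thick A (1 / (real n + 1)))"
    by (rule measure_mono_fmeasurable[OF sub])
       (auto intro!: borel_compact FF_compact fmeasurable_compact thick_compact cA simp: Pm_def C')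
  ultimately show ?thesis using n C'(2) by (intro exI[of _ Pm]) (auto simp: Pm_def)
qed


lemma part2:
  fixes K :: "nat set" and \<rho> \<alpha> :: real and p :: "'a::finite pmf" and B :: "(nat \<Rightarrow> 'a) set"
  assumes ud: "upper_density K = ereal \<rho>" and irr: "\<alpha> \<notin> \<rat>"
    and full: "set_pmf p = UNIV" and hB: "B = seq_ball \<omega>0 r \<or> B = seq_cball \<omega>0 r"
    and pos: "emeasure (bernoulli_measure p) B > 0"
  shows "AE \<omega> in bernoulli_measure p. measure lborel (A_set (K \<inter> return_times \<omega> B) \<alpha>) \<ge> \<rho>"
proof -
  obtain N where cyl: "{\<omega>. \<forall>i<N. \<omega> i = \<omega>0 i} \<subseteq> B" using ball_cyl[OF hB pos full] by blast
  define Fam where "Fam = {Pm :: rat set \<times> nat. finite (fst Pm)}"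
  define J where "J Pm = {k \<in> K. 1 \<le> k \<and> frac (real k * \<alpha>) \<notin> FF Pm}" for Pm
  have cnt: "countable Fam"
  proof -
    have "Fam = {P. finite P} \<times> UNIV" by (auto simp: Fam_def)
    then show ?thesis by (simp add: countable_Collect_finite)
  qed
  have each: "AE \<omega> in bernoulli_measure p. measure lborel (FF Pm) < \<rho> \<longrightarrow>
                 (\<exists>k\<in>J Pm. \<forall>i<N. \<omega> (k + i) = \<omega>0 i)" if "Pm \<in> Fam" for Pm
  proof (cases "measure lborel (FF Pm) < \<rho>")
    case False then show ?thesis by simp
  next
    case True
    have "infinite (J Pm)"
    proof
      assume fin: "finite (J Pm)"
      have sub: "K \<subseteq> {k. frac (real k * \<alpha>) \<in> FF Pm} \<union> (J Pm \<union> {0})"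
        by (auto simp: J_def)
      have "finite (J Pm \<union> {0})" using fin by simp
      moreover have "finite (fst Pm)" using that by (simp add: Fam_def)
      ultimately have "\<rho> \<le> measure lborel (FF Pm)"
        using density_bound[OF ud irr FF_compact sub] by blast
      with True show False by simp
    qed
    then have "AE \<omega> in bernoulli_measure p. \<exists>k\<in>J Pm. \<forall>i<N. \<omega> (k + i) = \<omega>0 i"
      by (rule hit_infinite[OF full])
    then show ?thesis by (rule AE_mp) simp
  qed
  have "AE \<omega> in bernoulli_measure p. \<forall>Pm\<in>Fam. measure lborel (FF Pm) < \<rho> \<longrightarrow>
                 (\<exists>k\<in>J Pm. \<forall>i<N. \<omega> (k + i) = \<omega>0 i)"
    using each cnt by (subst AE_ball_countable) auto
  then show ?thesis
  proof (rule AE_mp, intro AE_I2 impI)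
    fix \<omega> assume H: "\<forall>Pm\<in>Fam. measure lborel (FF Pm) < \<rho> \<longrightarrow> (\<exists>k\<in>J Pm. \<forall>i<N. \<omega> (k + i) = \<omega>0 i)"
    define A' where "A' = A_set (K \<inter> return_times \<omega> B) \<alpha>"
    show "measure lborel (A_set (K \<inter> return_times \<omega> B) \<alpha>) \<ge> \<rho>"
    proof (rule ccontr)
      assume "\<not> ?thesis"
      then have "measure lborel A' < \<rho>" by (simp add: A'_def)
      then obtain Pm where Pm: "finite (fst Pm)" "A' \<subseteq> FF Pm" "measure lborel (FF Pm) < \<rho>"
        using approx_FF[OF A_set_compact] unfolding A'_def by blast
      moreover have "Pm \<in> Fam" using Pm(1) by (simp add: Fam_def)
      ultimately obtain k where k: "k \<in> J Pm" "\<forall>i<N. \<omega> (k + i) = \<omega>0 i"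
        using H by blast
      have "(shift ^^ k) \<omega> \<in> B" using k(2) cyl by (auto simp: shift_pow)
      then have "k \<in> K \<inter> return_times \<omega> B" using k(1) by (auto simp: J_def return_times_def)
      then have "frac (real k * \<alpha>) \<in> A'" unfolding A'_def by (rule A_set_mem)
      with Pm(2) k(1) show False by (auto simp: J_def)
    qed
  qed
qed

theorem lemma9p1:
  fixes K :: "nat set" and \<rho> \<alpha> :: real
  assumes "upper_density K = ereal \<rho>" and "\<rho> > 0"
    and "0 < \<alpha>" and "\<alpha> < 1" and "\<alpha> \<notin> \<rat>"
  shows "measure lborel (A_set K \<alpha>) \<ge> \<rho> \<and>
    (\<forall>(p :: 'a::finite pmf) B \<omega>0 r.
        set_pmf p = UNIV \<longrightarrow>
        (B = seq_ball \<omega>0 r \<or> B = seq_cball \<omega>0 r) \<longrightarrow>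
        emeasure (bernoulli_measure p) B > 0 \<longrightarrow>
        (AE \<omega> in bernoulli_measure p.
            measure lborel (A_set (K \<inter> return_times \<omega> B) \<alpha>) \<ge> \<rho>))"
  using part1[OF assms(1) assms(5)] part2[OF assms(1) assms(5)] by blast

end
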